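(* Let $d$ be a positive integer, let $1<p\leqslant 2$, let $0<\varepsilon\leqslant1$, let $k\geqslant d$ be an integer, and set \[ \beta=\beta(p,\varepsilon)\coloneqq\Big(\frac{\varepsilon}{10}\Big)^{\frac{10}{p-1}},\qquad \ell=\ell(p,\varepsilon,k)\coloneqq\Big\lceil\frac{4}{\varepsilon^4(p-1)}\,k\Big\rceil. \] Let $n\geqslant\ell$ be an integer and let $\boldsymbol{X}$ be a $(\beta,\ell)$-dissociated, $d$-dimensional random array on $[n]$ whose entries take values in a measurable space $\mathcal{X}$. Then for every measurable function $f\colon\mathcal{X}^{\binom{[n]}{d}}\to\mathbb{R}$ with $\mathbb{E}[f(\boldsymbol{X})]=0$ and $\|f(\boldsymbol{X})\|_{L_p}=1$ there exists an interval $I$ of $[n]$ with $|I|=k$ such that for every $J\subseteq I$ with $|J|\geqslant d$, \[ \mathbb{P}\big(\big|\mathbb{E}[f(\boldsymbol{X})\,|\,\mathcal{F}_J]\big|\leqslant\varepsilon\big)\geqslant1-\varepsilon. \]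
   Context: $[n]=\{1,\dots,n\}$, $\binom{I}{d}$ is the set of $d$-element subsets of $I$. A $d$-dimensional random array on $[n]$ is a stochastic process $\boldsymbol{X}=\langle X_s:s\in\binom{[n]}{d}\rangle$; for $J\subseteq[n]$ with $|J|\geqslant d$, $\mathcal{F}_J=\sigma(\{X_s:s\in\binom{J}{d}\})$. For integers $n\geqslant\ell\geqslant 2d$ and $0\leqslant\beta\leqslant1$, $\boldsymbol{X}$ is $(\beta,\ell)$-dissociated if for every $J,K\subseteq[n]$ with $|J|,|K|\geqslant d$, $|J|+|K|\leqslant\ell$ and $\max(J)<\min(K)$, and all events $A\in\mathcal{F}_J$, $B\in\mathcal{F}_K$, we have $|\mathbb{P}(A\cap B)-\mathbb{P}(A)\mathbb{P}(B)|\leqslant\beta$. An interval of $[n]$ is a set of consecutive integers. *)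

theory Defs
  imports "HOL-Probability.Probability"
begin

definition dsubsets :: "nat set \<Rightarrow> nat \<Rightarrow> nat set set" where
  "dsubsets I d = {s. s \<subseteq> I \<and> card s = d}"

definition array_sigma ::
  "'a measure \<Rightarrow> 'x measure \<Rightarrow> nat \<Rightarrow> (nat set \<Rightarrow> 'a \<Rightarrow> 'x) \<Rightarrow> nat set \<Rightarrow> 'a measure" where
  "array_sigma M N d X J =
     sigma (space M) (\<Union>s\<in>dsubsets J d. {X s -` A \<inter> space M | A. A \<in> sets N})"

definition dissociated ::
  "'a measure \<Rightarrow> 'x measure \<Rightarrow> nat \<Rightarrow> nat \<Rightarrow> real \<Rightarrow> nat \<Rightarrow> (nat set \<Rightarrow> 'a \<Rightarrow> 'x) \<Rightarrow> bool" where
  "dissociated M N d n \<beta> L X \<longleftrightarrow>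
     (\<forall>J K. J \<subseteq> {1..n} \<and> K \<subseteq> {1..n} \<and> card J \<ge> d \<and> card K \<ge> d \<and>
            card J + card K \<le> L \<and> Max J < Min K \<longrightarrow>
        (\<forall>A\<in>sets (array_sigma M N d X J). \<forall>B\<in>sets (array_sigma M N d X K).
           \<bar>measure M (A \<inter> B) - measure M A * measure M B\<bar> \<le> \<beta>))"

definition is_interval :: "nat \<Rightarrow> nat set \<Rightarrow> bool" where
  "is_interval n I \<longleftrightarrow> I \<subseteq> {1..n} \<and> (\<exists>a b. I = {a..b})"

definition beta_par :: "real \<Rightarrow> real \<Rightarrow> real" where
  "beta_par p \<epsilon> = (\<epsilon> / 10) powr (10 / (p - 1))"

definition ell_par :: "real \<Rightarrow> real \<Rightarrow> nat \<Rightarrow> nat" where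
  "ell_par p \<epsilon> k = nat \<lceil>4 / (\<epsilon> ^ 4 * (p - 1)) * real k\<rceil>"

end

theory Submission
  imports Defs
begin

lemma power_sum_expand:
  fixes x :: "nat \<Rightarrow> real"
  shows "(\<Sum>i<m. x i) ^ n = (\<Sum>f\<in>{..<n} \<rightarrow>\<^sub>E {..<m}. \<Prod>j<n. x (f j))"
proof -
  have "(\<Sum>i<m. x i) ^ n = (\<Prod>j<n. \<Sum>i<m. x i)" by simp
  also have "\<dots> = (\<Sum>f\<in>{..<n} \<rightarrow>\<^sub>E {..<m}. \<Prod>j<n. x (f j))"
    by (rule prod_sum_PiE) auto
  finally show ?thesis .
qed

lemma integral_decomp:
  fixes t :: "nat \<Rightarrow> 'b \<Rightarrow> real" and G :: "(nat \<Rightarrow> real) \<Rightarrow> real"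
  assumes P: "prob_space P" and S: "finite S"
    and meas: "\<And>i. i \<in> S \<Longrightarrow> t i \<in> borel_measurable P"
    and V: "finite V" and vals: "\<And>i \<omega>. i \<in> S \<Longrightarrow> \<omega> \<in> space P \<Longrightarrow> t i \<omega> \<in> V"
  shows "(\<integral>\<omega>. G (restrict (\<lambda>i. t i \<omega>) S) \<partial>P)
     = (\<Sum>v\<in>S \<rightarrow>\<^sub>E V. G v * measure P {\<omega>\<in>space P. \<forall>i\<in>S. t i \<omega> = v i})"
proof -
  interpret prob_space P by fact
  have sets: "{\<omega>\<in>space P. \<forall>i\<in>S. t i \<omega> = v i} \<in> sets P" for v
    using S meas by measurable
  have pw: "G (restrict (\<lambda>i. t i \<omega>) S) = (\<Sum>v\<in>S \<rightarrow>\<^sub>E V. G v * indicator {\<omega>\<in>space P. \<forall>i\<in>S. t i \<omega> = v i} \<omega>)"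
    if w: "\<omega> \<in> space P" for \<omega>
  proof -
    have eq: "indicator {\<omega>\<in>space P. \<forall>i\<in>S. t i \<omega> = v i} \<omega> = (if v = restrict (\<lambda>i. t i \<omega>) S then 1 else (0::real))"
      if "v \<in> S \<rightarrow>\<^sub>E V" for v
      using that w by (auto simp: indicator_def PiE_iff extensional_def fun_eq_iff) metis
    have mem: "restrict (\<lambda>i. t i \<omega>) S \<in> S \<rightarrow>\<^sub>E V" using vals w by auto
    have "(\<Sum>v\<in>S \<rightarrow>\<^sub>E V. G v * indicator {\<omega>\<in>space P. \<forall>i\<in>S. t i \<omega> = v i} \<omega>)
       = (\<Sum>v\<in>S \<rightarrow>\<^sub>E V. if v = restrict (\<lambda>i. t i \<omega>) S then G v else 0)"
      by (rule sum.cong) (auto simp: eq)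
    also have "\<dots> = G (restrict (\<lambda>i. t i \<omega>) S)"
      using mem S V by (simp add: sum.delta finite_PiE)
    finally show ?thesis by simp
  qed
  have "(\<integral>\<omega>. G (restrict (\<lambda>i. t i \<omega>) S) \<partial>P)
      = (\<integral>\<omega>. (\<Sum>v\<in>S \<rightarrow>\<^sub>E V. G v * indicator {\<omega>\<in>space P. \<forall>i\<in>S. t i \<omega> = v i} \<omega>) \<partial>P)"
    by (rule Bochner_Integration.integral_cong) (auto simp: pw)
  also have "\<dots> = (\<Sum>v\<in>S \<rightarrow>\<^sub>E V. G v * measure P {\<omega>\<in>space P. \<forall>i\<in>S. t i \<omega> = v i})"
    by (subst Bochner_Integration.integral_sum) (auto intro!: integrable_real_mult_indicator sets simp: sets integrable_indicator_iff less_top[symmetric])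
  finally show ?thesis .
qed

lemma prod_model_integral:
  fixes g :: "nat \<Rightarrow> 'a \<Rightarrow> real"
  assumes M: "prob_space M" and I: "finite I" and int: "\<And>i. i \<in> I \<Longrightarrow> integrable M (g i)"
  shows "(\<integral>\<omega>. (\<Prod>i\<in>I. g i (\<omega> i)) \<partial>PiM I (\<lambda>_. M)) = (\<Prod>i\<in>I. integral\<^sup>L M (g i))"
proof -
  interpret prob_space M by fact
  interpret product_sigma_finite "\<lambda>_. M"
    by unfold_locales
  show ?thesis using I int by (rule product_integral_prod)
qed

lemma prod_model_cyl:
  fixes s :: "nat \<Rightarrow> 'a \<Rightarrow> real"
  assumes M: "prob_space M" and I: "finite I" and SI: "S \<subseteq> I"
    and meas: "\<And>i. i \<in> I \<Longrightarrow> s i \<in> borel_measurable M"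
  shows "measure (PiM I (\<lambda>_. M)) {\<omega>\<in>space (PiM I (\<lambda>_. M)). \<forall>i\<in>S. s i (\<omega> i) = v i}
       = (\<Prod>i\<in>S. measure M {x\<in>space M. s i x = v i})"
proof -
  interpret prob_space M by fact
  let ?P = "PiM I (\<lambda>_. M)"
  interpret P: prob_space ?P by (rule prob_space_PiM) (simp add: M)
  define g where "g i = (if i \<in> S then indicator {x\<in>space M. s i x = v i} else (\<lambda>_. 1::real))" for i
  have setsM: "{x\<in>space M. s i x = v i} \<in> sets M" if "i \<in> I" for i
    using meas[OF that] by measurable
  have int: "integrable M (g i)" if "i \<in> I" for i
    using setsM[OF that] by (auto simp: g_def integrable_indicator_iff less_top[symmetric])
  have sets: "{\<omega>\<in>space ?P. \<forall>i\<in>S. s i (\<omega> i) = v i} \<in> sets ?P"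
  proof -
    have mP: "(\<lambda>\<omega>. s i (\<omega> i)) \<in> borel_measurable ?P" if "i \<in> I" for i
      using meas[OF that] that by measurable
    then have "{\<omega>\<in>space ?P. s i (\<omega> i) = v i} \<in> sets ?P" if "i \<in> S" for i
    proof -
      have "{\<omega>\<in>space ?P. s i (\<omega> i) = v i} = (\<lambda>\<omega>. s i (\<omega> i)) -` {v i} \<inter> space ?P" by auto
      also have "\<dots> \<in> sets ?P" using that SI mP by (intro measurable_sets[of _ ?P borel]) auto
      finally show ?thesis .
    qed
    then show ?thesis using finite_subset[OF SI I] by (intro sets.sets_Collect_finite_All) auto
  qed
  have pw: "(\<Prod>i\<in>I. g i (\<omega> i)) = indicator {\<omega>\<in>space ?P. \<forall>i\<in>S. s i (\<omega> i) = v i} \<omega>"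
    if w: "\<omega> \<in> space ?P" for \<omega>
  proof -
    have wi: "\<omega> i \<in> space M" if "i \<in> I" for i using w that by (auto simp: space_PiM)
    have "(\<Prod>i\<in>I. g i (\<omega> i)) = (\<Prod>i\<in>S. indicator {x\<in>space M. s i x = v i} (\<omega> i))"
      using I SI by (subst prod.mono_neutral_right[of I S]) (auto simp: g_def)
    also have "\<dots> = indicator {\<omega>\<in>space ?P. \<forall>i\<in>S. s i (\<omega> i) = v i} \<omega>"
      using w wi SI finite_subset[OF SI I]
      by (auto simp: indicator_def prod_zero_iff subset_iff intro!: prod.neutral)
    finally show ?thesis .
  qed
  have "measure ?P {\<omega>\<in>space ?P. \<forall>i\<in>S. s i (\<omega> i) = v i}
       = (\<integral>\<omega>. indicator {\<omega>\<in>space ?P. \<forall>i\<in>S. s i (\<omega> i) = v i} \<omega> \<partial>?P)"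
    using sets by simp
  also have "\<dots> = (\<integral>\<omega>. (\<Prod>i\<in>I. g i (\<omega> i)) \<partial>?P)"
    by (rule Bochner_Integration.integral_cong) (auto simp: pw)
  also have "\<dots> = (\<Prod>i\<in>I. integral\<^sup>L M (g i))"
    by (rule prod_model_integral[OF M I int])
  also have "\<dots> = (\<Prod>i\<in>S. measure M {x\<in>space M. s i x = v i})"
    using I SI setsM by (subst prod.mono_neutral_right[of I S]) (auto simp: g_def prob_space intro!: prod.cong)
  finally show ?thesis .
qed

lemma hoeff_wrap:
  fixes g :: "'a \<Rightarrow> real"
  assumes M: "prob_space M" and g: "g \<in> borel_measurable M"
    and bd: "\<And>x. x \<in> space M \<Longrightarrow> g x \<in> {-1..1}" and l: "l > 0"
  shows "(\<integral>x. exp (l * (g x - integral\<^sup>L M g)) \<partial>M) \<le> exp (l\<^sup>2 / 2)"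
proof -
  interpret prob_space M by fact
  interpret interval_bounded_random_variable M g "-1" 1
  proof
    show "g \<in> borel_measurable M" by (rule g)
    show "AE x in M. g x \<in> {-1..1}" using bd by (intro AE_I2) auto
  qed
  have h: "nn_integral M (\<lambda>x. exp (l * (g x - expectation g))) \<le> ennreal (exp (l\<^sup>2 * (1 - (-1))\<^sup>2 / 8))"
    by (rule Hoeffdings_lemma_nn_integral) (rule l)
  have "(\<integral>x. exp (l * (g x - integral\<^sup>L M g)) \<partial>M) = enn2real (nn_integral M (\<lambda>x. ennreal (exp (l * (g x - expectation g)))))"
    by (rule integral_eq_nn_integral) (auto simp: g)
  also have "\<dots> \<le> exp (l\<^sup>2 * (1 - (-1))\<^sup>2 / 8)"
    by (rule enn2real_leI) (use h in auto)
  also have "\<dots> = exp (l\<^sup>2 / 2)" by simp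
  finally show ?thesis .
qed

lemma pow_le_exp:
  fixes w l :: real
  assumes l: "l > 0" and n: "n \<ge> 1"
  shows "\<bar>w\<bar> ^ n \<le> (real n / (exp 1 * l)) ^ n * (exp (l * w) + exp (-(l * w)))"
proof -
  define y where "y = l * \<bar>w\<bar> / n"
  have y0: "y \<ge> 0" using l n by (auto simp: y_def)
  have "y \<le> exp (y - 1)" using exp_ge_add_one_self[of "y - 1"] by simp
  then have "y ^ n \<le> exp (y - 1) ^ n" using y0 by (rule power_mono)
  also have "\<dots> = exp (l * \<bar>w\<bar>) * exp (-1) ^ n"
  proof -
    have "exp (y - 1) ^ n = exp (real n * (y - 1))" by (simp add: exp_of_nat_mult)
    also have "real n * (y - 1) = l * \<bar>w\<bar> + real n * (-1)" using n by (simp add: y_def field_simps)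
    also have "exp \<dots> = exp (l * \<bar>w\<bar>) * exp (-1) ^ n"
      by (simp only: exp_add exp_of_nat_mult[symmetric] mult.commute)
    finally show ?thesis .
  qed
  finally have 1: "y ^ n \<le> exp (l * \<bar>w\<bar>) * exp (-1) ^ n" .
  have "\<bar>w\<bar> = (real n / l) * y" using l n by (simp add: y_def)
  then have "\<bar>w\<bar> ^ n = (real n / l) ^ n * y ^ n" by (metis power_mult_distrib)
  also have "\<dots> \<le> (real n / l) ^ n * (exp (l * \<bar>w\<bar>) * exp (-1) ^ n)"
    using 1 l by (intro mult_left_mono) auto
  also have "\<dots> = (real n / (exp 1 * l)) ^ n * exp (l * \<bar>w\<bar>)"
    by (simp add: exp_minus power_divide power_mult_distrib field_simps)
  also have "\<dots> \<le> (real n / (exp 1 * l)) ^ n * (exp (l * w) + exp (-(l * w)))"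
    using l by (intro mult_left_mono) (auto simp: abs_if)
  finally show ?thesis .
qed

lemma abs_expect_le1:
  fixes s :: "'a \<Rightarrow> real"
  assumes M: "prob_space M" and meas: "s \<in> borel_measurable M"
    and bd: "\<And>x. x \<in> space M \<Longrightarrow> s x \<in> {-1..1}"
  shows "\<bar>integral\<^sup>L M s\<bar> \<le> 1"
proof -
  interpret prob_space M by fact
  have int: "integrable M s"
    by (rule integrable_const_bound[where B = 1]) (use bd meas in \<open>auto intro!: AE_I2 simp: abs_le_iff\<close>)
  have "integral\<^sup>L M s \<le> 1" by (rule integral_le_const[OF int]) (use bd in \<open>auto intro!: AE_I2\<close>)
  moreover have "-1 \<le> integral\<^sup>L M s" by (rule integral_ge_const[OF int]) (use bd in \<open>auto intro!: AE_I2\<close>)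
  ultimately show ?thesis by auto
qed

lemma prod_mgf:
  fixes s :: "nat \<Rightarrow> 'a \<Rightarrow> real"
  assumes M: "prob_space M" and l: "l > 0"
    and meas: "\<And>i. i < m \<Longrightarrow> s i \<in> borel_measurable M"
    and bd: "\<And>i x. i < m \<Longrightarrow> x \<in> space M \<Longrightarrow> s i x \<in> {-1..1}"
  shows "(\<integral>\<omega>. exp (l * (\<Sum>i<m. s i (\<omega> i) - integral\<^sup>L M (s i))) \<partial>PiM {..<m} (\<lambda>_. M)) \<le> exp (l\<^sup>2 / 2) ^ m"
proof -
  interpret prob_space M by fact
  have int: "integrable M (\<lambda>x. exp (l * (s i x - integral\<^sup>L M (s i))))" if "i < m" for i
  proof (rule integrable_const_bound[where B = "exp (l * 2)"])
    show "AE x in M. norm (exp (l * (s i x - integral\<^sup>L M (s i)))) \<le> exp (l * 2)"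
    proof (rule AE_I2)
      fix x assume x: "x \<in> space M"
      have "\<bar>integral\<^sup>L M (s i)\<bar> \<le> 1"
        using abs_expect_le1[OF M meas[OF that]] bd that by auto
      then show "norm (exp (l * (s i x - integral\<^sup>L M (s i)))) \<le> exp (l * 2)"
        using bd[OF that x] l by (auto intro!: mult_left_mono)
    qed
    show "(\<lambda>x. exp (l * (s i x - integral\<^sup>L M (s i)))) \<in> borel_measurable M"
      using meas[OF that] by measurable
  qed
  have "(\<integral>\<omega>. exp (l * (\<Sum>i<m. s i (\<omega> i) - integral\<^sup>L M (s i))) \<partial>PiM {..<m} (\<lambda>_. M))
      = (\<integral>\<omega>. (\<Prod>i<m. exp (l * (s i (\<omega> i) - integral\<^sup>L M (s i)))) \<partial>PiM {..<m} (\<lambda>_. M))"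
    by (simp add: sum_distrib_left exp_sum)
  also have "\<dots> = (\<Prod>i<m. (\<integral>x. exp (l * (s i x - integral\<^sup>L M (s i))) \<partial>M))"
    by (rule prod_model_integral[OF M]) (auto intro: int)
  also have "\<dots> \<le> (\<Prod>i<m. exp (l\<^sup>2 / 2))"
    by (intro prod_mono conjI integral_nonneg hoeff_wrap[OF M meas] l) (use bd in auto)
  finally show ?thesis by simp
qed

lemma prod_moment:
  fixes s :: "nat \<Rightarrow> 'a \<Rightarrow> real"
  assumes M: "prob_space M" and m: "m > 0" and R: "R \<ge> 1"
    and meas: "\<And>i. i < m \<Longrightarrow> s i \<in> borel_measurable M"
    and bd: "\<And>i x. i < m \<Longrightarrow> x \<in> space M \<Longrightarrow> s i x \<in> {-1..1}"
  shows "(\<integral>\<omega>. (\<Sum>i<m. s i (\<omega> i) - integral\<^sup>L M (s i)) ^ (2*R) \<partial>PiM {..<m} (\<lambda>_. M))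
          \<le> 2 * (2 * real R * real m / exp 1) ^ R"
proof -
  interpret prob_space M by fact
  let ?P = "PiM {..<m} (\<lambda>_. M)"
  interpret P: prob_space ?P by (rule prob_space_PiM) (simp add: M)
  define W where "W \<omega> = (\<Sum>i<m. s i (\<omega> i) - integral\<^sup>L M (s i))" for \<omega>
  define l where "l = sqrt (2 * real R / real m)"
  have l: "l > 0" using m R by (auto simp: l_def)
  define C where "C = (real (2*R) / (exp 1 * l)) ^ (2*R)"
  have C: "C \<ge> 0" using l by (simp add: C_def)
  have measP: "(\<lambda>\<omega>. s i (\<omega> i)) \<in> borel_measurable ?P" if "i < m" for i
  proof -
    have "(\<lambda>\<omega>. \<omega> i) \<in> ?P \<rightarrow>\<^sub>M M" using that by (intro measurable_component_singleton) auto
    from measurable_compose[OF this meas[OF that]] show ?thesis .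
  qed
  have Wm: "W \<in> borel_measurable ?P"
    unfolding W_def by (intro borel_measurable_sum borel_measurable_diff measP) auto
  have mu: "\<bar>integral\<^sup>L M (s i)\<bar> \<le> 1" if "i < m" for i
    using abs_expect_le1[OF M meas[OF that]] bd that by auto
  have Wb: "\<bar>W \<omega>\<bar> \<le> 2 * real m" if w: "\<omega> \<in> space ?P" for \<omega>
  proof -
    have "\<bar>W \<omega>\<bar> \<le> (\<Sum>i<m. \<bar>s i (\<omega> i) - integral\<^sup>L M (s i)\<bar>)" unfolding W_def by (rule sum_abs)
    also have "\<dots> \<le> (\<Sum>i<m. 2)"
    proof (rule sum_mono)
      fix i assume i: "i \<in> {..<m}"
      have "\<omega> i \<in> space M" using w i by (auto simp: space_PiM)
      then show "\<bar>s i (\<omega> i) - integral\<^sup>L M (s i)\<bar> \<le> 2" using bd[of i "\<omega> i"] mu[of i] i by auto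
    qed
    finally show ?thesis by simp
  qed
  have intW: "integrable ?P (\<lambda>\<omega>. W \<omega> ^ (2*R))"
  proof (rule P.integrable_const_bound[where B = "(2 * real m) ^ (2*R)"])
    show "AE x in ?P. norm (W x ^ (2*R)) \<le> (2 * real m) ^ (2*R)"
    proof (rule AE_I2)
      fix x assume x: "x \<in> space ?P"
      have "norm (W x ^ (2*R)) = \<bar>W x\<bar> ^ (2*R)" by (simp only: real_norm_def power_abs)
      also have "\<dots> \<le> (2 * real m) ^ (2*R)" by (rule power_mono[OF Wb[OF x]]) auto
      finally show "norm (W x ^ (2*R)) \<le> (2 * real m) ^ (2*R)" .
    qed
  qed (use Wm in auto)
  have intE: "integrable ?P (\<lambda>\<omega>. exp (c * W \<omega>))" for c
  proof (rule P.integrable_const_bound[where B = "exp (\<bar>c\<bar> * (2 * real m))"])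
    show "AE x in ?P. norm (exp (c * W x)) \<le> exp (\<bar>c\<bar> * (2 * real m))"
    proof (rule AE_I2)
      fix x assume x: "x \<in> space ?P"
      have "c * W x \<le> \<bar>c\<bar> * \<bar>W x\<bar>" by (metis abs_ge_self abs_mult)
      also have "\<dots> \<le> \<bar>c\<bar> * (2 * real m)" by (rule mult_left_mono[OF Wb[OF x]]) auto
      finally show "norm (exp (c * W x)) \<le> exp (\<bar>c\<bar> * (2 * real m))" by simp
    qed
  qed (use Wm in auto)
  have pw: "W \<omega> ^ (2*R) \<le> C * (exp (l * W \<omega>) + exp ((-l) * W \<omega>))" for \<omega>
  proof -
    have "W \<omega> ^ (2*R) = \<bar>W \<omega>\<bar> ^ (2*R)" by (simp add: power_even_abs)
    also have "\<dots> \<le> C * (exp (l * W \<omega>) + exp (-(l * W \<omega>)))"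
      unfolding C_def by (rule pow_le_exp[OF l]) (use R in auto)
    finally show ?thesis by simp
  qed
  have e1: "(\<integral>\<omega>. exp (l * W \<omega>) \<partial>?P) \<le> exp (l\<^sup>2 / 2) ^ m"
    unfolding W_def by (rule prod_mgf[OF M l meas bd])
  have e2: "(\<integral>\<omega>. exp ((-l) * W \<omega>) \<partial>?P) \<le> exp (l\<^sup>2 / 2) ^ m"
  proof -
    have eq: "(\<lambda>\<omega>. exp ((-l) * W \<omega>)) = (\<lambda>\<omega>. exp (l * (\<Sum>i<m. (\<lambda>x. - s i x) (\<omega> i) - integral\<^sup>L M (\<lambda>x. - s i x))))"
      by (auto simp: W_def sum_negf[symmetric] algebra_simps sum_distrib_left)
    show ?thesis unfolding eq
      by (rule prod_mgf[OF M l]) (use meas bd in auto)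
  qed
  have "(\<integral>\<omega>. W \<omega> ^ (2*R) \<partial>?P) \<le> (\<integral>\<omega>. C * (exp (l * W \<omega>) + exp ((-l) * W \<omega>)) \<partial>?P)"
  proof (rule integral_mono[OF intW])
    show "integrable ?P (\<lambda>\<omega>. C * (exp (l * W \<omega>) + exp ((-l) * W \<omega>)))"
      using intE[of l] intE[of "-l"] by (intro integrable_mult_right Bochner_Integration.integrable_add)
  qed (use pw in auto)
  also have "\<dots> = C * ((\<integral>\<omega>. exp (l * W \<omega>) \<partial>?P) + (\<integral>\<omega>. exp ((-l) * W \<omega>) \<partial>?P))"
    using intE[of l] intE[of "-l"] by (simp add: Bochner_Integration.integral_add)
  also have "\<dots> \<le> C * (2 * exp (l\<^sup>2 / 2) ^ m)"
    using e1 e2 C by (intro mult_left_mono) auto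
  also have "\<dots> = 2 * (2 * real R * real m / exp 1) ^ R"
  proof -
    have l2: "l\<^sup>2 = 2 * real R / real m" using m by (simp add: l_def)
    have "C = ((real (2*R))\<^sup>2 / ((exp 1)\<^sup>2 * l\<^sup>2)) ^ R"
      unfolding C_def by (simp add: power_mult power_divide power_mult_distrib)
    also have "(real (2*R))\<^sup>2 / ((exp 1)\<^sup>2 * l\<^sup>2) = 2 * real R * real m / (exp 1)\<^sup>2"
      using m R l2 l by (simp add: field_simps power2_eq_square)
    finally have C': "C = (2 * real R * real m / (exp 1)\<^sup>2) ^ R" .
    have "exp (l\<^sup>2 / 2) ^ m = exp (real m * (l\<^sup>2 / 2))" by (simp only: exp_of_nat_mult)
    also have "real m * (l\<^sup>2 / 2) = real R" using m by (simp add: l2)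
    finally have E': "exp (l\<^sup>2 / 2) ^ m = exp 1 ^ R" by (metis exp_of_nat_mult mult.right_neutral)
    have "(2 * real R * real m / (exp 1)\<^sup>2) ^ R * exp 1 ^ R = (2 * real R * real m / (exp 1)\<^sup>2 * exp 1) ^ R"
      by (simp only: power_mult_distrib)
    also have "2 * real R * real m / (exp 1)\<^sup>2 * exp 1 = 2 * real R * real m / exp 1"
      by (simp add: power2_eq_square)
    finally have F: "(2 * real R * real m / (exp 1)\<^sup>2) ^ R * exp 1 ^ R = (2 * real R * real m / exp 1) ^ R" .
    show ?thesis unfolding C' E' using F by simp
  qed
  finally show ?thesis unfolding W_def .
qed

lemma prod_bound_2n:
  fixes a :: "nat \<Rightarrow> real"
  assumes "\<And>j. j < n \<Longrightarrow> \<bar>a j\<bar> \<le> 2"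
  shows "\<bar>\<Prod>j<n. a j\<bar> \<le> 2 ^ n"
proof -
  have "\<bar>\<Prod>j<n. a j\<bar> = (\<Prod>j<n. \<bar>a j\<bar>)" by (simp add: abs_prod)
  also have "\<dots> \<le> (\<Prod>j<n. 2)" by (rule prod_mono) (use assms in auto)
  finally show ?thesis by simp
qed

lemma moment_compare:
  fixes s :: "nat \<Rightarrow> 'a \<Rightarrow> real" and \<beta> :: real
  assumes M: "prob_space M"
    and meas: "\<And>i. i < m \<Longrightarrow> s i \<in> borel_measurable M"
    and vals: "\<And>i x. i < m \<Longrightarrow> x \<in> space M \<Longrightarrow> s i x \<in> {-1,0,1}"
    and beta0: "\<beta> \<ge> 0"
    and NI: "\<And>S v. S \<subseteq> {..<m} \<Longrightarrow>
       \<bar>measure M {x\<in>space M. \<forall>i\<in>S. s i x = v i} - (\<Prod>i\<in>S. measure M {x\<in>space M. s i x = v i})\<bar> \<le> real (card S) * \<beta>"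
  shows "\<bar>(\<integral>x. (\<Sum>i<m. s i x - integral\<^sup>L M (s i)) ^ n \<partial>M)
          - (\<integral>\<omega>. (\<Sum>i<m. s i (\<omega> i) - integral\<^sup>L M (s i)) ^ n \<partial>PiM {..<m} (\<lambda>_. M))\<bar>
         \<le> real m ^ n * 6 ^ n * real n * \<beta>"
proof -
  interpret prob_space M by fact
  let ?P = "PiM {..<m} (\<lambda>_. M)"
  interpret P: prob_space ?P by (rule prob_space_PiM) (simp add: M)
  define \<mu> where "\<mu> i = integral\<^sup>L M (s i)" for i
  define V where "V = {-1, 0, 1::real}"
  have V: "finite V" "card V = 3" by (auto simp: V_def)
  have bd: "s i x \<in> {-1..1}" if "i < m" "x \<in> space M" for i x using vals[OF that] by auto
  have mu: "\<bar>\<mu> i\<bar> \<le> 1" if "i < m" for i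
    unfolding \<mu>_def by (rule abs_expect_le1[OF M meas[OF that]]) (use bd that in auto)
  have measP: "(\<lambda>\<omega>. s i (\<omega> i)) \<in> borel_measurable ?P" if "i < m" for i
  proof -
    have "(\<lambda>\<omega>. \<omega> i) \<in> ?P \<rightarrow>\<^sub>M M" using that by (intro measurable_component_singleton) auto
    from measurable_compose[OF this meas[OF that]] show ?thesis .
  qed
  define D where "D = {..<n} \<rightarrow>\<^sub>E {..<m}"
  have Dfin: "finite D" unfolding D_def by (auto intro: finite_PiE)
  have cardD: "card D = m ^ n" unfolding D_def by (simp add: card_PiE)
  define A where "A f = (\<integral>x. (\<Prod>j<n. s (f j) x - \<mu> (f j)) \<partial>M)" for f
  define B where "B f = (\<integral>\<omega>. (\<Prod>j<n. s (f j) (\<omega> (f j)) - \<mu> (f j)) \<partial>?P)" for f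
  have intA: "integrable M (\<lambda>x. \<Prod>j<n. s (f j) x - \<mu> (f j))" if f: "f \<in> D" for f
  proof (rule integrable_const_bound[where B = "2^n"])
    show "AE x in M. norm (\<Prod>j<n. s (f j) x - \<mu> (f j)) \<le> 2 ^ n"
    proof (rule AE_I2)
      fix x assume x: "x \<in> space M"
      have "\<bar>s (f j) x - \<mu> (f j)\<bar> \<le> 2" if "j < n" for j
        using f that bd[of "f j" x] mu[of "f j"] x by (auto simp: D_def PiE_iff)
      then show "norm (\<Prod>j<n. s (f j) x - \<mu> (f j)) \<le> 2 ^ n" using prod_bound_2n by auto
    qed
    show "(\<lambda>x. \<Prod>j<n. s (f j) x - \<mu> (f j)) \<in> borel_measurable M"
      using f by (intro borel_measurable_prod borel_measurable_diff meas) (auto simp: D_def PiE_iff)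
  qed
  have intB: "integrable ?P (\<lambda>\<omega>. \<Prod>j<n. s (f j) (\<omega> (f j)) - \<mu> (f j))" if f: "f \<in> D" for f
  proof (rule P.integrable_const_bound[where B = "2^n"])
    show "AE x in ?P. norm (\<Prod>j<n. s (f j) (x (f j)) - \<mu> (f j)) \<le> 2 ^ n"
    proof (rule AE_I2)
      fix x assume x: "x \<in> space ?P"
      have "\<bar>s (f j) (x (f j)) - \<mu> (f j)\<bar> \<le> 2" if "j < n" for j
      proof -
        have fj: "f j < m" using f that by (auto simp: D_def PiE_iff)
        then have "x (f j) \<in> space M" using x by (auto simp: space_PiM)
        then show ?thesis using bd[of "f j" "x (f j)"] mu[of "f j"] fj by auto
      qed
      then show "norm (\<Prod>j<n. s (f j) (x (f j)) - \<mu> (f j)) \<le> 2 ^ n" using prod_bound_2n by auto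
    qed
    show "(\<lambda>x. \<Prod>j<n. s (f j) (x (f j)) - \<mu> (f j)) \<in> borel_measurable ?P"
      using f by (intro borel_measurable_prod borel_measurable_diff measP) (auto simp: D_def PiE_iff)
  qed
  have perf: "\<bar>A f - B f\<bar> \<le> 6 ^ n * real n * \<beta>" if f: "f \<in> D" for f
  proof -
    define S where "S = f ` {..<n}"
    have S: "finite S" "S \<subseteq> {..<m}" "card S \<le> n"
      using f card_image_le[of "{..<n}" f] by (auto simp: S_def D_def PiE_iff)
    define H where "H v = (\<Prod>j<n. v (f j) - \<mu> (f j))" for v :: "nat \<Rightarrow> real"
    have Hb: "\<bar>H v\<bar> \<le> 2 ^ n" if v: "v \<in> S \<rightarrow>\<^sub>E V" for v
      unfolding H_def
    proof (rule prod_bound_2n)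
      fix j assume j: "j < n"
      have "f j \<in> S" using j by (auto simp: S_def)
      then have "v (f j) \<in> V" "f j < m" using v S by auto
      then show "\<bar>v (f j) - \<mu> (f j)\<bar> \<le> 2" using mu[of "f j"] by (auto simp: V_def)
    qed
    have "A f = (\<integral>x. H (restrict (\<lambda>i. s i x) S) \<partial>M)"
      unfolding A_def H_def by (rule Bochner_Integration.integral_cong) (auto simp: S_def)
    also have "\<dots> = (\<Sum>v\<in>S \<rightarrow>\<^sub>E V. H v * measure M {x\<in>space M. \<forall>i\<in>S. s i x = v i})"
      by (rule integral_decomp[OF M S(1) _ V(1)]) (use S meas vals in \<open>auto simp: V_def\<close>)
    finally have eA: "A f = \<dots>" .
    have "B f = (\<integral>\<omega>. H (restrict (\<lambda>i. s i (\<omega> i)) S) \<partial>?P)"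
      unfolding B_def H_def by (rule Bochner_Integration.integral_cong) (auto simp: S_def)
    also have "\<dots> = (\<Sum>v\<in>S \<rightarrow>\<^sub>E V. H v * measure ?P {\<omega>\<in>space ?P. \<forall>i\<in>S. s i (\<omega> i) = v i})"
    proof (rule integral_decomp[OF P.prob_space_axioms S(1) _ V(1)])
      show "(\<lambda>\<omega>. s i (\<omega> i)) \<in> borel_measurable ?P" if "i \<in> S" for i
        using measP that S by auto
      show "s i (\<omega> i) \<in> V" if "i \<in> S" "\<omega> \<in> space ?P" for i \<omega>
      proof -
        have "\<omega> i \<in> space M" using that S by (auto simp: space_PiM)
        then show ?thesis using vals[of i "\<omega> i"] that S by (auto simp: V_def)
      qed
    qed
    also have "\<dots> = (\<Sum>v\<in>S \<rightarrow>\<^sub>E V. H v * (\<Prod>i\<in>S. measure M {x\<in>space M. s i x = v i}))"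
      by (intro sum.cong refl arg_cong2[where f = "(*)"] prod_model_cyl[OF M _ S(2)]) (use meas in auto)
    finally have eB: "B f = \<dots>" .
    have "\<bar>A f - B f\<bar> = \<bar>\<Sum>v\<in>S \<rightarrow>\<^sub>E V. H v * (measure M {x\<in>space M. \<forall>i\<in>S. s i x = v i} - (\<Prod>i\<in>S. measure M {x\<in>space M. s i x = v i}))\<bar>"
      unfolding eA eB by (simp add: sum_subtractf[symmetric] right_diff_distrib)
    also have "\<dots> \<le> (\<Sum>v\<in>S \<rightarrow>\<^sub>E V. \<bar>H v\<bar> * \<bar>measure M {x\<in>space M. \<forall>i\<in>S. s i x = v i} - (\<Prod>i\<in>S. measure M {x\<in>space M. s i x = v i})\<bar>)"
      by (rule order_trans[OF sum_abs]) (simp add: abs_mult)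
    also have "\<dots> \<le> (\<Sum>v\<in>S \<rightarrow>\<^sub>E V. 2 ^ n * (real n * \<beta>))"
    proof (rule sum_mono)
      fix v assume v: "v \<in> S \<rightarrow>\<^sub>E V"
      have "real (card S) * \<beta> \<le> real n * \<beta>" using S beta0 by (intro mult_right_mono) auto
      then show "\<bar>H v\<bar> * \<bar>measure M {x\<in>space M. \<forall>i\<in>S. s i x = v i} - (\<Prod>i\<in>S. measure M {x\<in>space M. s i x = v i})\<bar> \<le> 2 ^ n * (real n * \<beta>)"
        using NI[OF S(2), of v] Hb[OF v] by (intro mult_mono) auto
    qed
    also have "\<dots> = real (3 ^ card S) * 2 ^ n * real n * \<beta>"
      using V S(1) by (simp add: card_PiE prod_constant)
    also have "\<dots> \<le> 3 ^ n * 2 ^ n * real n * \<beta>"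
      using S beta0 by (intro mult_right_mono) (auto intro: power_increasing)
    also have "\<dots> = 6 ^ n * real n * \<beta>" by (simp add: power_mult_distrib[symmetric])
    finally show ?thesis .
  qed
  have "(\<integral>x. (\<Sum>i<m. s i x - \<mu> i) ^ n \<partial>M) = (\<integral>x. (\<Sum>f\<in>D. \<Prod>j<n. s (f j) x - \<mu> (f j)) \<partial>M)"
    unfolding D_def by (subst power_sum_expand) simp
  also have "\<dots> = (\<Sum>f\<in>D. A f)"
    unfolding A_def by (rule Bochner_Integration.integral_sum) (rule intA)
  finally have eA: "(\<integral>x. (\<Sum>i<m. s i x - \<mu> i) ^ n \<partial>M) = (\<Sum>f\<in>D. A f)" .
  have "(\<integral>\<omega>. (\<Sum>i<m. s i (\<omega> i) - \<mu> i) ^ n \<partial>?P) = (\<integral>\<omega>. (\<Sum>f\<in>D. \<Prod>j<n. s (f j) (\<omega> (f j)) - \<mu> (f j)) \<partial>?P)"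
    unfolding D_def by (subst power_sum_expand) simp
  also have "\<dots> = (\<Sum>f\<in>D. B f)"
    unfolding B_def by (rule Bochner_Integration.integral_sum) (rule intB)
  finally have eB: "(\<integral>\<omega>. (\<Sum>i<m. s i (\<omega> i) - \<mu> i) ^ n \<partial>?P) = (\<Sum>f\<in>D. B f)" .
  have "\<bar>(\<Sum>f\<in>D. A f) - (\<Sum>f\<in>D. B f)\<bar> \<le> (\<Sum>f\<in>D. \<bar>A f - B f\<bar>)"
    by (simp add: sum_subtractf[symmetric] sum_abs)
  also have "\<dots> \<le> (\<Sum>f\<in>D. 6 ^ n * real n * \<beta>)" by (rule sum_mono) (rule perf)
  also have "\<dots> = real m ^ n * 6 ^ n * real n * \<beta>" using cardD by simp
  finally show ?thesis using eA eB unfolding \<mu>_def by simp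
qed

lemma moment_bound:
  fixes s :: "nat \<Rightarrow> 'a \<Rightarrow> real" and \<beta> :: real
  assumes M: "prob_space M" and m: "m > 0" and R: "R \<ge> 1"
    and meas: "\<And>i. i < m \<Longrightarrow> s i \<in> borel_measurable M"
    and vals: "\<And>i x. i < m \<Longrightarrow> x \<in> space M \<Longrightarrow> s i x \<in> {-1,0,1}"
    and beta0: "\<beta> \<ge> 0"
    and NI: "\<And>S v. S \<subseteq> {..<m} \<Longrightarrow>
       \<bar>measure M {x\<in>space M. \<forall>i\<in>S. s i x = v i} - (\<Prod>i\<in>S. measure M {x\<in>space M. s i x = v i})\<bar> \<le> real (card S) * \<beta>"
  shows "(\<integral>x. (\<Sum>i<m. s i x - integral\<^sup>L M (s i)) ^ (2*R) \<partial>M)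
         \<le> 2 * (2 * real R * real m / exp 1) ^ R + real m ^ (2*R) * 6 ^ (2*R) * real (2*R) * \<beta>"
proof -
  have bd: "s i x \<in> {-1..1}" if "i < m" "x \<in> space M" for i x using vals[OF that] by auto
  have 1: "(\<integral>\<omega>. (\<Sum>i<m. s i (\<omega> i) - integral\<^sup>L M (s i)) ^ (2*R) \<partial>PiM {..<m} (\<lambda>_. M))
          \<le> 2 * (2 * real R * real m / exp 1) ^ R"
    by (rule prod_moment[OF M m R meas bd])
  have 2: "\<bar>(\<integral>x. (\<Sum>i<m. s i x - integral\<^sup>L M (s i)) ^ (2*R) \<partial>M)
          - (\<integral>\<omega>. (\<Sum>i<m. s i (\<omega> i) - integral\<^sup>L M (s i)) ^ (2*R) \<partial>PiM {..<m} (\<lambda>_. M))\<bar>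
         \<le> real m ^ (2*R) * 6 ^ (2*R) * real (2*R) * \<beta>"
    by (rule moment_compare[OF M meas vals beta0 NI])
  from 1 2 show ?thesis by linarith
qed

definition gens :: "'a measure \<Rightarrow> 'x measure \<Rightarrow> nat \<Rightarrow> (nat set \<Rightarrow> 'a \<Rightarrow> 'x) \<Rightarrow> nat set \<Rightarrow> 'a set set" where
  "gens M N d X J = (\<Union>s\<in>dsubsets J d. {X s -` A \<inter> space M | A. A \<in> sets N})"

lemma gens_pow: "gens M N d X J \<subseteq> Pow (space M)"
  unfolding gens_def by auto

lemma array_sigma_space: "space (array_sigma M N d X J) = space M"
  unfolding array_sigma_def using gens_pow[of M N d X J] unfolding gens_def
  by (simp add: space_measure_of_conv)

lemma array_sigma_sets: "sets (array_sigma M N d X J) = sigma_sets (space M) (gens M N d X J)"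
  unfolding array_sigma_def using gens_pow[of M N d X J] unfolding gens_def
  by (simp add: sets_measure_of)

lemma array_sigma_mono:
  assumes "J \<subseteq> J'"
  shows "sets (array_sigma M N d X J) \<subseteq> sets (array_sigma M N d X J')"
proof -
  have "gens M N d X J \<subseteq> gens M N d X J'"
    using assms unfolding gens_def dsubsets_def by blast
  then show ?thesis unfolding array_sigma_sets by (rule sigma_sets_mono')
qed

lemma array_sigma_sub:
  assumes J: "J \<subseteq> {1..n}" and Xm: "\<And>s. s \<in> dsubsets {1..n} d \<Longrightarrow> X s \<in> M \<rightarrow>\<^sub>M N"
  shows "sets (array_sigma M N d X J) \<subseteq> sets M"
proof -
  have "gens M N d X J \<subseteq> sets M"
  proof
    fix G assume "G \<in> gens M N d X J"
    then obtain s A where s: "s \<in> dsubsets J d" and A: "A \<in> sets N" and G: "G = X s -` A \<inter> space M"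
      unfolding gens_def by blast
    have "s \<in> dsubsets {1..n} d" using s J unfolding dsubsets_def by auto
    then show "G \<in> sets M" using Xm A G by (auto intro: measurable_sets)
  qed
  then show ?thesis unfolding array_sigma_sets by (rule sets.sigma_sets_subset)
qed

lemma array_subalg:
  assumes J: "J \<subseteq> {1..n}" and Xm: "\<And>s. s \<in> dsubsets {1..n} d \<Longrightarrow> X s \<in> M \<rightarrow>\<^sub>M N"
  shows "subalgebra M (array_sigma M N d X J)"
  unfolding subalgebra_def using array_sigma_sub[OF J Xm] array_sigma_space[of M N d X J] by simp

lemma NI_dissoc:
  fixes s :: "nat \<Rightarrow> 'a \<Rightarrow> real" and J :: "nat \<Rightarrow> nat set" and \<beta> :: real
  assumes M: "prob_space M" and d: "d \<ge> 1" and beta0: "\<beta> \<ge> 0"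
    and dis: "dissociated M N d n \<beta> L X"
    and mkL: "m * k \<le> L" and mkn: "m * k \<le> n"
    and Jsub: "\<And>i. i < m \<Longrightarrow> J i \<subseteq> {i*k+1..i*k+k}"
    and Jcard: "\<And>i. i < m \<Longrightarrow> card (J i) \<ge> d"
    and Xm: "\<And>s. s \<in> dsubsets {1..n} d \<Longrightarrow> X s \<in> M \<rightarrow>\<^sub>M N"
    and smeas: "\<And>i. i < m \<Longrightarrow> s i \<in> borel_measurable (array_sigma M N d X (J i))"
    and S: "S \<subseteq> {..<m}"
  shows "\<bar>measure M {x\<in>space M. \<forall>i\<in>S. s i x = v i} - (\<Prod>i\<in>S. measure M {x\<in>space M. s i x = v i})\<bar>
          \<le> real (card S) * \<beta>"
proof -
  interpret prob_space M by fact
  let ?F = "array_sigma M N d X"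
  have Jn: "J i \<subseteq> {1..n}" if "i < m" for i
  proof -
    have "i * k + k \<le> m * k" using that by (metis add.commute mult.commute mult_Suc_right mult_le_mono2 Suc_leI)
    then show ?thesis using Jsub[OF that] mkn by auto
  qed
  have Jfin: "finite (J i)" if "i < m" for i using Jn[OF that] finite_subset by blast
  have Jne: "J i \<noteq> {}" if "i < m" for i using Jcard[OF that] d by auto
  have ev: "{x\<in>space M. s i x = c} \<in> sets (?F (J i))" if "i < m" for i c
  proof -
    have "{x\<in>space M. s i x = c} = s i -` {c} \<inter> space (?F (J i))" by (auto simp: array_sigma_space)
    also have "\<dots> \<in> sets (?F (J i))" by (rule measurable_sets[OF smeas[OF that]]) simp
    finally show ?thesis .
  qed
  have evU: "{x\<in>space M. \<forall>i\<in>S'. s i x = v i} \<in> sets (?F (\<Union>i\<in>S'. J i))" if "S' \<subseteq> {..<m}" for S'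
  proof -
    have fin: "finite S'" using that finite_subset by blast
    have "{x\<in>space (?F (\<Union>i\<in>S'. J i)). \<forall>i\<in>S'. s i x = v i} \<in> sets (?F (\<Union>i\<in>S'. J i))"
    proof (rule sets.sets_Collect_finite_All[OF _ fin])
      fix i assume i: "i \<in> S'"
      have "{x\<in>space M. s i x = v i} \<in> sets (?F (J i))" using ev i that by auto
      also have "\<dots> \<subseteq> sets (?F (\<Union>i\<in>S'. J i))" by (rule array_sigma_mono) (use i in auto)
      finally show "{x\<in>space (?F (\<Union>i\<in>S'. J i)). s i x = v i} \<in> sets (?F (\<Union>i\<in>S'. J i))"
        by (simp add: array_sigma_space)
    qed
    then show ?thesis by (simp add: array_sigma_space)
  qed
  have Usub: "(\<Union>i\<in>S'. J i) \<subseteq> {1..n}" if "S' \<subseteq> {..<m}" for S' using Jn that by auto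
  have evM: "A \<in> sets M" if "A \<in> sets (?F J')" "J' \<subseteq> {1..n}" for A J'
    using array_sigma_sub[where J=J' and n=n and d=d and X=X and M=M and N=N, OF that(2) Xm] that(1) by auto
  have main: "\<forall>S. S \<subseteq> {..<j} \<longrightarrow> \<bar>measure M {x\<in>space M. \<forall>i\<in>S. s i x = v i} - (\<Prod>i\<in>S. measure M {x\<in>space M. s i x = v i})\<bar>
          \<le> real (card S) * \<beta>" if "j \<le> m" for j
    using that
  proof (induction j)
    case 0
    then show ?case by (simp add: prob_space)
  next
    case (Suc j)
    show ?case
    proof (intro allI impI)
      fix S assume S: "S \<subseteq> {..<Suc j}"
      show "\<bar>measure M {x\<in>space M. \<forall>i\<in>S. s i x = v i} - (\<Prod>i\<in>S. measure M {x\<in>space M. s i x = v i})\<bar>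
          \<le> real (card S) * \<beta>"
      proof (cases "j \<in> S")
        case False
        then have "S \<subseteq> {..<j}" using S by (auto simp: less_Suc_eq)
        then show ?thesis using Suc by auto
      next
        case True
        define S' where "S' = S - {j}"
        have S': "S' \<subseteq> {..<j}" "j \<notin> S'" "S = insert j S'" using S True by (auto simp: S'_def less_Suc_eq)
        have jm: "j < m" using Suc by auto
        have S'm: "S' \<subseteq> {..<m}" using S' jm by auto
        have finS': "finite S'" using S' finite_subset by blast
        define A where "A = {x\<in>space M. \<forall>i\<in>S'. s i x = v i}"
        define B where "B = {x\<in>space M. s j x = v j}"
        define c where "c = (\<Prod>i\<in>S'. measure M {x\<in>space M. s i x = v i})"
        have AB: "{x\<in>space M. \<forall>i\<in>S. s i x = v i} = A \<inter> B" unfolding A_def B_def using S' by auto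
        have pr: "(\<Prod>i\<in>S. measure M {x\<in>space M. s i x = v i}) = measure M B * c"
          unfolding c_def B_def using S' finS' by simp
        have cardS: "card S = Suc (card S')" using S' finS' by simp
        have IH: "\<bar>measure M A - c\<bar> \<le> real (card S') * \<beta>" using Suc S' unfolding A_def c_def by auto
        have Bev: "B \<in> sets (?F (J j))" unfolding B_def by (rule ev[OF jm])
        have Aev: "A \<in> sets (?F (\<Union>i\<in>S'. J i))" unfolding A_def by (rule evU[OF S'm])
        have AM: "A \<in> sets M" by (rule evM[OF Aev Usub[OF S'm]])
        have BM: "B \<in> sets M" by (rule evM[OF Bev Jn[OF jm]])
        have dAB: "\<bar>measure M (A \<inter> B) - measure M A * measure M B\<bar> \<le> \<beta>"
        proof (cases "S' = {}")
          case True
          then have "A = space M" unfolding A_def by auto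
          then show ?thesis using BM beta0 by (simp add: prob_space Int_absorb1 sets.sets_into_space)
        next
          case False
          then obtain i0 where i0: "i0 \<in> S'" by auto
          let ?U = "\<Union>i\<in>S'. J i"
          have Ufin: "finite ?U" using finS' Jfin S'm by auto
          have Ujk: "?U \<subseteq> {1..j*k}"
          proof
            fix x assume "x \<in> ?U"
            then obtain i where i: "i \<in> S'" "x \<in> J i" by auto
            have "i < j" using i S' by auto
            then have "i * k + k \<le> j * k" by (metis add.commute mult.commute mult_Suc_right mult_le_mono2 Suc_leI)
            moreover have "i < m" using i S'm by auto
            ultimately show "x \<in> {1..j*k}" using Jsub[of i] i by auto
          qed
          have Kjk: "J j \<subseteq> {j*k+1..j*k+k}" by (rule Jsub[OF jm])
          have cU: "card ?U \<ge> d"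
          proof -
            have "card (J i0) \<le> card ?U" using i0 Ufin by (intro card_mono) auto
            then show ?thesis using Jcard[of i0] i0 S'm by auto
          qed
          have cUle: "card ?U \<le> j * k" using card_mono[OF _ Ujk] by simp
          have cKle: "card (J j) \<le> k" using card_mono[OF _ Kjk] by simp
          have "j * k + k \<le> m * k" using jm by (metis add.commute mult.commute mult_Suc_right mult_le_mono2 Suc_leI)
          then have csum: "card ?U + card (J j) \<le> L" using cUle cKle mkL by linarith
          have Une: "?U \<noteq> {}" using Jne[of i0] i0 S'm by auto
          have maxU: "Max ?U \<le> j * k" using Ufin Une Ujk by (auto simp: Max_le_iff)
          have minK: "j * k + 1 \<le> Min (J j)" using Jfin[OF jm] Jne[OF jm] Kjk by (auto simp: Min_ge_iff)
          have "?U \<subseteq> {1..n} \<and> J j \<subseteq> {1..n} \<and> d \<le> card ?U \<and> d \<le> card (J j) \<and>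
              card ?U + card (J j) \<le> L \<and> Max ?U < Min (J j)"
            using Usub[OF S'm] Jn[OF jm] cU Jcard[OF jm] csum maxU minK by auto
          then show ?thesis using dis Aev Bev unfolding dissociated_def by blast
        qed
        have B01: "0 \<le> measure M B" "measure M B \<le> 1" by auto
        have "\<bar>measure M (A \<inter> B) - measure M B * c\<bar>
            \<le> \<bar>measure M (A \<inter> B) - measure M A * measure M B\<bar> + measure M B * \<bar>measure M A - c\<bar>"
        proof -
          have "measure M (A \<inter> B) - measure M B * c = (measure M (A \<inter> B) - measure M A * measure M B) + measure M B * (measure M A - c)"
            by (simp add: algebra_simps)
          then have "\<bar>measure M (A \<inter> B) - measure M B * c\<bar> \<le> \<bar>measure M (A \<inter> B) - measure M A * measure M B\<bar> + \<bar>measure M B * (measure M A - c)\<bar>"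
            by (metis abs_triangle_ineq)
          then show ?thesis using B01 by (simp add: abs_mult)
        qed
        also have "\<dots> \<le> \<beta> + 1 * (real (card S') * \<beta>)"
          using dAB IH B01 by (intro add_mono mult_mono) auto
        also have "\<dots> = real (card S) * \<beta>" using cardS by (simp add: algebra_simps)
        finally show ?thesis unfolding AB pr .
      qed
    qed
  qed
  show ?thesis using main[of m] S by auto
qed

lemma e_gt: "exp (1::real) > 2.7"
proof -
  have "\<bar>exp (1::real) - 5837465777 / 2147483648\<bar> \<le> inverse (2 ^ 32)" by (rule e_approx_32)
  then have "- (exp (1::real) - 5837465777 / 2147483648) \<le> inverse (2 ^ 32)"
    by (rule order_trans[OF abs_ge_minus_self])
  moreover have "inverse (2 ^ 32 :: real) = 1 / 4294967296" by simp
  ultimately show ?thesis by linarith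
qed

lemma young_interp:
  fixes a b p q T :: real and R :: nat
  assumes p: "p > 1" and q: "q = p / (p - 1)" and T: "T > 0" and qR: "q \<le> 2 * real R"
    and a: "a \<ge> 0" and b: "b \<ge> 0"
  shows "a * b \<le> T / p * a powr p + T / q * ((q / (2 * real R)) * b ^ (2*R) / T ^ (2*R) + (1 - q / (2 * real R)))"
proof -
  have q1: "q > 1" using p q by (simp add: less_divide_eq)
  have "1 / q = (p - 1) / p" using p q by simp
  then have pq: "1 / p + 1 / q = 1" using p by (simp add: field_simps)
  have R0: "R > 0" using qR q1 by (cases R) auto
  define \<alpha> where "\<alpha> = T powr (1 / p)"
  have \<alpha>: "\<alpha> > 0" using T by (simp add: \<alpha>_def)
  have "a * b = (\<alpha> * a) * (b / \<alpha>)" using \<alpha> by simp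
  also have "\<dots> \<le> (\<alpha> * a) powr p / p + (b / \<alpha>) powr q / q"
    by (rule Youngs_inequality) (use p q1 pq a b \<alpha> in auto)
  also have "(\<alpha> * a) powr p = T * a powr p"
    using \<alpha> a T p by (simp add: powr_mult \<alpha>_def powr_powr)
  also have "(b / \<alpha>) powr q = T * (b / T) powr q"
  proof -
    have "(b / \<alpha>) powr q = b powr q / \<alpha> powr q" using b \<alpha> by (simp add: powr_divide)
    also have "\<alpha> powr q = T powr (q / p)" using T by (simp add: \<alpha>_def powr_powr)
    also have "b powr q = T powr q * (b / T) powr q" using b T by (simp add: powr_divide)
    also have "T powr q * (b / T) powr q / T powr (q / p) = T powr (q - q / p) * (b / T) powr q"
      using T by (simp add: powr_diff)
    also have "q - q / p = 1" using p q by (simp add: field_simps)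
    finally show ?thesis using T by simp
  qed
  also have "(b / T) powr q \<le> (q / (2 * real R)) * b ^ (2*R) / T ^ (2*R) + (1 - q / (2 * real R))"
  proof (cases "b = 0")
    case True
    then show ?thesis using q1 qR R0 by (simp add: power_0_left field_simps)
  next
    case False
    then have bT: "b / T > 0" using b T by simp
    have "((b / T) ^ (2*R)) powr (q / (2 * real R)) * 1 powr (1 - q / (2 * real R))
          \<le> (q / (2 * real R)) * (b / T) ^ (2*R) + (1 - q / (2 * real R)) * 1"
      by (rule Youngs_inequality_0) (use q1 qR bT R0 in auto)
    moreover have "((b / T) ^ (2*R)) powr (q / (2 * real R)) = (b / T) powr q"
      using bT R0 by (simp add: powr_realpow[symmetric] powr_powr)
    ultimately show ?thesis by (simp add: power_divide)
  qed
  finally show ?thesis using T q1 by (simp add: divide_right_mono mult_left_mono)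
qed

lemma numeric_final:
  fixes p \<epsilon> q :: real and m R :: nat
  assumes p1: "1 < p" and p2: "p \<le> 2" and e0: "0 < \<epsilon>" and e1: "\<epsilon> \<le> 1" and m: "m > 0"
    and q: "q = p / (p - 1)" and R: "R = nat \<lceil>q / 2\<rceil>"
    and K: "real m * \<epsilon> ^ 4 > 4 * q - 5"
  shows "2 * (2 * real R * real m / exp 1) ^ R
          + real m ^ (2*R) * 6 ^ (2*R) * real (2*R) * ((\<epsilon> / 10) powr (10 / (p - 1)))
         < (real m * \<epsilon>\<^sup>2) ^ (2*R)"
proof -
  have q2: "q \<ge> 2" using p1 p2 q by (simp add: le_divide_eq)
  have t: "10 / (p - 1) = 10 * (q - 1)"
  proof -
    have "q - 1 = 1 / (p - 1)" using p1 q by (simp add: field_simps)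
    then show ?thesis by simp
  qed
  have Rge: "real R \<ge> q / 2" using R q2 by linarith
  have Rlt: "real R < q / 2 + 1" using R q2 by linarith
  have R1: "R \<ge> 1" using Rge q2 by linarith
  define K' where "K' = real m * \<epsilon> ^ 4"
  have K'3: "K' > 3" using K q2 unfolding K'_def by linarith
  define Z where "Z = (real m * \<epsilon>\<^sup>2) ^ (2*R)"
  have Z0: "Z > 0" using m e0 unfolding Z_def by simp
  have ZmK: "Z = (real m * K') ^ R"
    unfolding Z_def K'_def by (simp add: power_mult power2_eq_square algebra_simps power4_eq_xxxx)
  define x where "x = 2 * real R / (exp 1 * K')"
  have x0: "x \<ge> 0" using K'3 unfolding x_def by simp
  have ee: "exp (1::real) > 2.7" by (rule e_gt)
  have x12: "x \<le> 1 / 2"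
  proof -
    have "4 * real R \<le> exp 1 * K'"
    proof -
      have "4 * real R < 2 * q + 4" using Rlt by linarith
      also have "2 * q + 4 \<le> 2.7 * (4 * q - 5)" using q2 by (simp add: algebra_simps)
      also have "\<dots> \<le> exp 1 * K'" using ee K K'3 q2 unfolding K'_def by (intro mult_mono) auto
      finally show ?thesis by linarith
    qed
    then show ?thesis using K'3 ee unfolding x_def by (simp add: field_simps)
  qed
  have x14: "x \<le> 1 / 4" if "R = 1"
  proof -
    have "8 \<le> exp 1 * K'"
    proof -
      have "8 \<le> 2.7 * (3::real)" by simp
      also have "\<dots> \<le> exp 1 * K'" using ee K'3 by (intro mult_mono) auto
      finally show ?thesis .
    qed
    then show ?thesis using K'3 ee that unfolding x_def by (simp add: field_simps)
  qed
  have T1: "2 * x ^ R \<le> 1 / 2"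
  proof (cases "R = 1")
    case True then show ?thesis using x14 by simp
  next
    case False
    then have "R \<ge> 2" using R1 by auto
    then have "x ^ R \<le> x ^ 2" using x0 x12 by (intro power_decreasing) auto
    also have "\<dots> \<le> (1/2) ^ 2" using x0 x12 by (intro power_mono) auto
    finally have "x ^ R \<le> 1/4" by (simp add: power2_eq_square)
    then show ?thesis by simp
  qed
  have term1: "2 * (2 * real R * real m / exp 1) ^ R = Z * (2 * x ^ R)"
  proof -
    have "2 * real R * real m / exp 1 = (real m * K') * x" using K'3 unfolding x_def by (simp add: field_simps)
    then show ?thesis unfolding ZmK by (simp add: power_mult_distrib)
  qed
  define \<beta> where "\<beta> = (\<epsilon> / 10) powr (10 / (p - 1))"
  have b1: "\<beta> \<le> \<epsilon> ^ (4*R) / 10 ^ (5*R)"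
  proof -
    have eq: "\<beta> = \<epsilon> powr (10 * (q - 1)) / 10 powr (10 * (q - 1))"
      unfolding \<beta>_def t using e0 by (simp add: powr_divide)
    have a1: "\<epsilon> powr (10 * (q - 1)) \<le> \<epsilon> powr (real (4*R))"
      by (rule powr_mono') (use Rlt q2 e0 e1 in auto)
    have a2: "10 powr (10 * (q - 1)) \<ge> 10 powr (real (5*R))"
      by (rule powr_mono) (use Rlt q2 in auto)
    have "\<beta> \<le> \<epsilon> powr (real (4*R)) / 10 powr (real (5*R))"
      unfolding eq using a1 a2 e0 by (intro frac_le) auto
    also have "\<dots> = \<epsilon> ^ (4*R) / 10 ^ (5*R)" using e0 by (simp only: powr_realpow)
    finally show ?thesis .
  qed
  have T2: "6 ^ (2*R) * real (2*R) * \<beta> / \<epsilon> ^ (4*R) < 1 / 2"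
  proof -
    have "6 ^ (2*R) * real (2*R) * \<beta> / \<epsilon> ^ (4*R) \<le> 6 ^ (2*R) * real (2*R) * (\<epsilon> ^ (4*R) / 10 ^ (5*R)) / \<epsilon> ^ (4*R)"
      using b1 e0 by (intro divide_right_mono mult_left_mono) auto
    also have "\<dots> = 2 * real R * (36 ^ R / 100000 ^ R)"
    proof -
      have "(6::real) ^ (2*R) = 36 ^ R" by (simp add: power_mult)
      moreover have "(10::real) ^ (5*R) = 100000 ^ R" by (simp add: power_mult)
      ultimately show ?thesis using e0 by simp
    qed
    also have "\<dots> = 2 * real R * (36 / 100000) ^ R" by (simp only: power_divide)
    also have "\<dots> \<le> 2 * 2 ^ R * (36 / 100000) ^ R"
      using less_exp[of R] by (intro mult_right_mono mult_left_mono) auto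
    also have "\<dots> = 2 * (2 * (36 / 100000)) ^ R" by (simp only: power_mult_distrib mult.assoc)
    also have "\<dots> \<le> 2 * (2 * (36 / 100000)) ^ 1" using R1 by (intro mult_left_mono power_decreasing) auto
    finally show ?thesis by simp
  qed
  have term2: "real m ^ (2*R) * 6 ^ (2*R) * real (2*R) * \<beta> = Z * (6 ^ (2*R) * real (2*R) * \<beta> / \<epsilon> ^ (4*R))"
    unfolding Z_def using e0 by (simp add: power_mult_distrib power_mult[symmetric] mult.commute)
  have "2 * (2 * real R * real m / exp 1) ^ R + real m ^ (2*R) * 6 ^ (2*R) * real (2*R) * \<beta>
      = Z * (2 * x ^ R + 6 ^ (2*R) * real (2*R) * \<beta> / \<epsilon> ^ (4*R))"
    unfolding term1 term2 by (simp add: algebra_simps)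
  also have "\<dots> < Z * 1" using T1 T2 Z0 by (intro mult_strict_left_mono) auto
  finally show ?thesis unfolding Z_def \<beta>_def by simp
qed

theorem theorem2p2:
  fixes M :: "'a measure" and N :: "'x measure"
    and X :: "nat set \<Rightarrow> 'a \<Rightarrow> 'x"
    and f :: "(nat set \<Rightarrow> 'x) \<Rightarrow> real"
    and d k n :: nat and p \<epsilon> :: real
  assumes "prob_space M"
    and "d \<ge> 1" and "1 < p" and "p \<le> 2" and "0 < \<epsilon>" and "\<epsilon> \<le> 1" and "k \<ge> d"
    and "n \<ge> ell_par p \<epsilon> k"
    and "\<And>s. s \<in> dsubsets {1..n} d \<Longrightarrow> X s \<in> M \<rightarrow>\<^sub>M N"
    and "dissociated M N d n (beta_par p \<epsilon>) (ell_par p \<epsilon> k) X"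
    and "f \<in> borel_measurable (PiM (dsubsets {1..n} d) (\<lambda>_. N))"
    and "integral\<^sup>L M (\<lambda>\<omega>. f (\<lambda>s\<in>dsubsets {1..n} d. X s \<omega>)) = 0"
    and "integrable M (\<lambda>\<omega>. \<bar>f (\<lambda>s\<in>dsubsets {1..n} d. X s \<omega>)\<bar> powr p)"
    and "(\<integral>\<omega>. \<bar>f (\<lambda>s\<in>dsubsets {1..n} d. X s \<omega>)\<bar> powr p \<partial>M) powr (1 / p) = 1"
  shows "\<exists>I. is_interval n I \<and> card I = k \<and>
           (\<forall>J. J \<subseteq> I \<and> card J \<ge> d \<longrightarrow>
              measure M {\<omega> \<in> space M.
                 \<bar>real_cond_exp M (array_sigma M N d X J)
                    (\<lambda>\<omega>. f (\<lambda>s\<in>dsubsets {1..n} d. X s \<omega>)) \<omega>\<bar> \<le> \<epsilon>} \<ge> 1 - \<epsilon>)"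
proof (rule ccontr)
  assume neg: "\<not> ?thesis"
  note M = assms(1) and d1 = assms(2) and p1 = assms(3) and p2 = assms(4) and e0 = assms(5)
    and e1 = assms(6) and kd = assms(7) and ln = assms(8) and Xm = assms(9) and dis = assms(10)
    and fm = assms(11) and EY0 = assms(12) and intp = assms(13) and normp = assms(14)
  interpret prob_space M by (rule M)
  define Y where "Y = (\<lambda>\<omega>. f (\<lambda>s\<in>dsubsets {1..n} d. X s \<omega>))"
  define L where "L = ell_par p \<epsilon> k"
  define m where "m = L div k"
  define q where "q = p / (p - 1)"
  define R where "R = nat \<lceil>q / 2\<rceil>"
  define \<beta> where "\<beta> = beta_par p \<epsilon>"
  define F where "F J = array_sigma M N d X J" for J
  have k1: "k \<ge> 1" using kd d1 by simp
  have q2: "q \<ge> 2" using p1 p2 by (simp add: q_def le_divide_eq)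
  have beta0: "\<beta> \<ge> 0" by (simp add: \<beta>_def beta_par_def)
  have mkL: "m * k \<le> L" unfolding m_def by simp
  have Ln: "L \<le> n" using ln by (simp add: L_def)
  have K: "real m * \<epsilon> ^ 4 > 4 * q - 5"
  proof -
    have e4: "\<epsilon> ^ 4 > 0" "\<epsilon> ^ 4 \<le> 1" using e0 e1 by (auto simp: power_le_one)
    have pp: "p - 1 > 0" using p1 by simp
    have "real L \<ge> 4 / (\<epsilon> ^ 4 * (p - 1)) * real k"
      unfolding L_def ell_par_def by linarith
    moreover have "L < (m + 1) * k" unfolding m_def using k1
      by (metis add.commute div_mult_mod_eq mod_less_divisor mult_Suc nat_add_left_cancel_less not_one_le_zero plus_1_eq_Suc gr0I)
    then have "real L < (real m + 1) * real k" by (metis of_nat_add of_nat_less_iff of_nat_mult of_nat_1)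
    ultimately have "4 / (\<epsilon> ^ 4 * (p - 1)) * real k < (real m + 1) * real k" by linarith
    then have "4 / (\<epsilon> ^ 4 * (p - 1)) < real m + 1" by (rule mult_right_less_imp_less) simp
    then have "4 / (p - 1) < (real m + 1) * \<epsilon> ^ 4" using e4 pp by (simp add: field_simps)
    moreover have "4 / (p - 1) = 4 * q - 4" using pp by (simp add: q_def field_simps)
    ultimately show ?thesis using e4 by (simp add: algebra_simps)
  qed
  have m0: "m > 0"
  proof -
    have "real m * \<epsilon> ^ 4 > 0" using K q2 by linarith
    then show ?thesis by (cases m) auto
  qed
  define Iv where "Iv i = {i*k+1..i*k+k}" for i
  have Ivn: "Iv i \<subseteq> {1..n}" if "i < m" for i
  proof -
    have "i * k + k \<le> m * k" using that by (metis add.commute mult.commute mult_Suc_right mult_le_mono2 Suc_leI)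
    then show ?thesis using mkL Ln by (auto simp: Iv_def)
  qed
  have bad: "\<exists>J. J \<subseteq> Iv i \<and> card J \<ge> d \<and>
      measure M {\<omega> \<in> space M. \<bar>real_cond_exp M (F J) Y \<omega>\<bar> \<le> \<epsilon>} < 1 - \<epsilon>" if "i < m" for i
  proof -
    have "is_interval n (Iv i)" using Ivn[OF that] by (auto simp: is_interval_def Iv_def)
    moreover have "card (Iv i) = k" by (simp add: Iv_def)
    ultimately show ?thesis using neg unfolding F_def Y_def by (auto simp: not_le)
  qed
  then obtain J where J: "\<And>i. i < m \<Longrightarrow> J i \<subseteq> Iv i \<and> card (J i) \<ge> d \<and>
      measure M {\<omega> \<in> space M. \<bar>real_cond_exp M (F (J i)) Y \<omega>\<bar> \<le> \<epsilon>} < 1 - \<epsilon>"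
    by metis
  have Jn: "J i \<subseteq> {1..n}" if "i < m" for i using J[OF that] Ivn[OF that] by auto
  have subalg: "subalgebra M (F (J i))" if "i < m" for i
    unfolding F_def by (rule array_subalg[OF Jn[OF that] Xm])
  have sfs: "sigma_finite_subalgebra M (F (J i))" if "i < m" for i
  proof (rule finite_measure_subalgebra_is_sigma_finite)
    show "finite_measure_subalgebra M (F (J i))"
      unfolding finite_measure_subalgebra_def finite_measure_subalgebra_axioms_def
      using subalg[OF that] by (simp add: finite_measure_axioms)
  qed
  define Z where "Z i = real_cond_exp M (F (J i)) Y" for i
  define s where "s i \<omega> = (if Z i \<omega> > \<epsilon> then 1 else if Z i \<omega> < -\<epsilon> then -1 else (0::real))" for i \<omega>
  have ZF: "Z i \<in> borel_measurable (F (J i))" for i unfolding Z_def by (rule borel_measurable_cond_exp)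
  have ZM: "Z i \<in> borel_measurable M" for i unfolding Z_def by (rule borel_measurable_cond_exp2)
  have sF: "s i \<in> borel_measurable (F (J i))" for i
    unfolding s_def using ZF[of i] by measurable
  have sM: "s i \<in> borel_measurable M" for i
    unfolding s_def using ZM[of i] by measurable
  have svals: "s i x \<in> {-1, 0, 1}" for i x by (simp add: s_def)
  have NI: "\<bar>measure M {x\<in>space M. \<forall>i\<in>S. s i x = v i} - (\<Prod>i\<in>S. measure M {x\<in>space M. s i x = v i})\<bar>
          \<le> real (card S) * \<beta>" if "S \<subseteq> {..<m}" for S v
    unfolding \<beta>_def
  proof (rule NI_dissoc[OF M d1 _ dis _ _ _ _ Xm _ that])
    show "0 \<le> beta_par p \<epsilon>" using beta0 by (simp add: \<beta>_def)
    show "m * k \<le> ell_par p \<epsilon> k" using mkL by (simp add: L_def)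
    show "m * k \<le> n" using mkL Ln by simp
    show "J i \<subseteq> {i * k + 1..i * k + k}" if "i < m" for i using J[OF that] by (simp add: Iv_def)
    show "d \<le> card (J i)" if "i < m" for i using J[OF that] by simp
    show "s i \<in> borel_measurable (array_sigma M N d X (J i))" if "i < m" for i using sF[of i] by (simp add: F_def)
  qed
  have Ym: "Y \<in> borel_measurable M"
  proof -
    have "(\<lambda>\<omega>. \<lambda>s\<in>dsubsets {1..n} d. X s \<omega>) \<in> M \<rightarrow>\<^sub>M PiM (dsubsets {1..n} d) (\<lambda>_. N)"
      by (rule measurable_restrict) (rule Xm)
    from measurable_compose[OF this fm] show ?thesis unfolding Y_def .
  qed
  have intp': "integrable M (\<lambda>\<omega>. \<bar>Y \<omega>\<bar> powr p)" using intp by (simp add: Y_def)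
  have Yint: "integrable M Y"
  proof (rule Bochner_Integration.integrable_bound)
    show "integrable M (\<lambda>\<omega>. 1 + \<bar>Y \<omega>\<bar> powr p)" using intp' by simp
    show "AE x in M. norm (Y x) \<le> norm (1 + \<bar>Y x\<bar> powr p)"
    proof (rule AE_I2)
      fix x
      have "\<bar>Y x\<bar> \<le> 1 + \<bar>Y x\<bar> powr p"
      proof (cases "\<bar>Y x\<bar> \<le> 1")
        case True then show ?thesis by (smt (verit) powr_ge_zero)
      next
        case False
        then have "\<bar>Y x\<bar> = \<bar>Y x\<bar> powr 1" by simp
        also have "\<dots> \<le> \<bar>Y x\<bar> powr p" using False p1 by (intro powr_mono) auto
        finally show ?thesis by simp
      qed
      then show "norm (Y x) \<le> norm (1 + \<bar>Y x\<bar> powr p)" by simp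
    qed
  qed (rule Ym)
  have EYp: "(\<integral>\<omega>. \<bar>Y \<omega>\<bar> powr p \<partial>M) = 1"
  proof -
    define I where "I = (\<integral>\<omega>. \<bar>Y \<omega>\<bar> powr p \<partial>M)"
    have I0: "I \<ge> 0" unfolding I_def by simp
    have I1: "I powr (1 / p) = 1" using normp by (simp add: I_def Y_def)
    have "I \<noteq> 0" using I1 by auto
    then have "I = (I powr (1 / p)) powr p" using I0 p1 by (simp add: powr_powr)
    then show ?thesis using I1 by (simp add: I_def)
  qed
  have EY: "integral\<^sup>L M Y = 0" using EY0 by (simp add: Y_def)
  have sb: "\<bar>s i \<omega>\<bar> \<le> 1" for i \<omega> by (simp add: s_def)
  have intsY: "integrable M (\<lambda>\<omega>. s i \<omega> * Y \<omega>)" for i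
  proof (rule Bochner_Integration.integrable_bound[OF Yint])
    show "(\<lambda>\<omega>. s i \<omega> * Y \<omega>) \<in> borel_measurable M" using sM Ym by measurable
    show "AE x in M. norm (s i x * Y x) \<le> norm (Y x)"
      using sb[of i] by (intro AE_I2) (simp add: abs_mult mult_left_le_one_le)
  qed
  have Ys: "(\<integral>\<omega>. Y \<omega> * s i \<omega> \<partial>M) > \<epsilon>\<^sup>2" if "i < m" for i
  proof -
    have ce1: "integrable M (\<lambda>\<omega>. s i \<omega> * Z i \<omega>)"
      unfolding Z_def by (rule sigma_finite_subalgebra.real_cond_exp_intg(1)[OF sfs[OF that] intsY sF Ym])
    have ce2: "(\<integral>\<omega>. s i \<omega> * Z i \<omega> \<partial>M) = (\<integral>\<omega>. s i \<omega> * Y \<omega> \<partial>M)"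
      unfolding Z_def by (rule sigma_finite_subalgebra.real_cond_exp_intg(2)[OF sfs[OF that] intsY sF Ym])
    define A where "A = {\<omega>\<in>space M. \<epsilon> < \<bar>Z i \<omega>\<bar>}"
    define B where "B = {\<omega>\<in>space M. \<bar>Z i \<omega>\<bar> \<le> \<epsilon>}"
    have Bev: "B \<in> events" unfolding B_def using ZM[of i] by measurable
    have AB: "A = space M - B" unfolding A_def B_def by auto
    have Aev: "A \<in> events" using Bev AB by auto
    have PB: "prob B < 1 - \<epsilon>" using J[OF that] unfolding B_def Z_def by simp
    have PA: "prob A > \<epsilon>" using PB Bev AB prob_compl[OF Bev] by simp
    have pw: "\<epsilon> * indicator A \<omega> \<le> s i \<omega> * Z i \<omega>" for \<omega>
      unfolding A_def s_def indicator_def using e0 by auto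
    have "\<epsilon> * prob A = (\<integral>\<omega>. \<epsilon> * indicator A \<omega> \<partial>M)" using Aev by simp
    also have "\<dots> \<le> (\<integral>\<omega>. s i \<omega> * Z i \<omega> \<partial>M)"
      by (rule integral_mono[OF _ ce1 pw]) (use Aev in \<open>auto simp: integrable_indicator_iff less_top[symmetric]\<close>)
    finally have "\<epsilon> * prob A \<le> (\<integral>\<omega>. s i \<omega> * Y \<omega> \<partial>M)" using ce2 by simp
    moreover have "\<epsilon> * \<epsilon> < \<epsilon> * prob A" using PA e0 by simp
    ultimately show ?thesis by (simp add: power2_eq_square mult.commute)
  qed
  define \<mu> where "\<mu> i = integral\<^sup>L M (s i)" for i
  define W where "W \<omega> = (\<Sum>i<m. s i \<omega> - \<mu> i)" for \<omega>
  define T where "T = real m * \<epsilon>\<^sup>2"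
  have T0: "T > 0" using m0 e0 by (simp add: T_def)
  have intYs: "integrable M (\<lambda>\<omega>. Y \<omega> * s i \<omega> - \<mu> i * Y \<omega>)" for i
    using intsY[of i] Yint by (intro Bochner_Integration.integrable_diff) (auto simp: mult.commute)
  have EYW: "(\<integral>\<omega>. Y \<omega> * W \<omega> \<partial>M) > T"
  proof -
    have "(\<integral>\<omega>. Y \<omega> * W \<omega> \<partial>M) = (\<integral>\<omega>. (\<Sum>i<m. Y \<omega> * s i \<omega> - \<mu> i * Y \<omega>) \<partial>M)"
      unfolding W_def by (simp add: sum_distrib_left algebra_simps)
    also have "\<dots> = (\<Sum>i<m. (\<integral>\<omega>. Y \<omega> * s i \<omega> - \<mu> i * Y \<omega> \<partial>M))"
      by (rule Bochner_Integration.integral_sum) (rule intYs)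
    also have "\<dots> = (\<Sum>i<m. (\<integral>\<omega>. Y \<omega> * s i \<omega> \<partial>M))"
    proof (rule sum.cong[OF refl])
      fix i
      have "(\<integral>\<omega>. Y \<omega> * s i \<omega> - \<mu> i * Y \<omega> \<partial>M) = (\<integral>\<omega>. Y \<omega> * s i \<omega> \<partial>M) - (\<integral>\<omega>. \<mu> i * Y \<omega> \<partial>M)"
        using intsY[of i] Yint by (intro Bochner_Integration.integral_diff) (auto simp: mult.commute)
      also have "(\<integral>\<omega>. \<mu> i * Y \<omega> \<partial>M) = 0" using EY by simp
      finally show "(\<integral>\<omega>. Y \<omega> * s i \<omega> - \<mu> i * Y \<omega> \<partial>M) = (\<integral>\<omega>. Y \<omega> * s i \<omega> \<partial>M)" by simp
    qed
    also have "\<dots> > (\<Sum>i<m. \<epsilon>\<^sup>2)"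
      by (rule sum_strict_mono) (use m0 Ys in auto)
    finally show ?thesis by (simp add: T_def)
  qed
  have mom: "(\<integral>\<omega>. W \<omega> ^ (2*R) \<partial>M) < T ^ (2*R)"
  proof -
    have "(\<integral>\<omega>. W \<omega> ^ (2*R) \<partial>M) \<le> 2 * (2 * real R * real m / exp 1) ^ R + real m ^ (2*R) * 6 ^ (2*R) * real (2*R) * \<beta>"
      unfolding W_def \<mu>_def
    proof (rule moment_bound[OF M m0 _ sM _ beta0 NI])
      have c: "\<lceil>q / 2\<rceil> \<ge> 1" using q2 by (simp add: le_ceiling_iff)
      show "1 \<le> R" unfolding R_def using c le_nat_iff[of "\<lceil>q / 2\<rceil>" 1] by simp
    qed (use svals in auto)
    also have "\<dots> < T ^ (2*R)"
      unfolding T_def \<beta>_def beta_par_def by (rule numeric_final[OF p1 p2 e0 e1 m0 q_def R_def K])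
    finally show ?thesis .
  qed
  have mu1: "\<bar>\<mu> i\<bar> \<le> 1" for i
    unfolding \<mu>_def by (rule abs_expect_le1[OF M sM]) (simp add: s_def)
  have Wb: "\<bar>W \<omega>\<bar> \<le> 2 * real m" for \<omega>
  proof -
    have "\<bar>W \<omega>\<bar> \<le> (\<Sum>i<m. \<bar>s i \<omega> - \<mu> i\<bar>)" unfolding W_def by (rule sum_abs)
    also have "\<dots> \<le> (\<Sum>i<m. 2)"
    proof (rule sum_mono)
      fix i
      show "\<bar>s i \<omega> - \<mu> i\<bar> \<le> 2" using sb[of i \<omega>] mu1[of i] by linarith
    qed
    finally show ?thesis by simp
  qed
  have WM: "W \<in> borel_measurable M" unfolding W_def using sM by measurable
  have intW: "integrable M (\<lambda>\<omega>. W \<omega> ^ (2*R))"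
  proof (rule integrable_const_bound[where B = "(2 * real m) ^ (2*R)"])
    show "AE x in M. norm (W x ^ (2*R)) \<le> (2 * real m) ^ (2*R)"
    proof (rule AE_I2)
      fix x
      have "norm (W x ^ (2*R)) = \<bar>W x\<bar> ^ (2*R)" by (simp only: real_norm_def power_abs)
      also have "\<dots> \<le> (2 * real m) ^ (2*R)" by (rule power_mono[OF Wb]) auto
      finally show "norm (W x ^ (2*R)) \<le> (2 * real m) ^ (2*R)" .
    qed
  qed (use WM in auto)
  have intYW: "integrable M (\<lambda>\<omega>. \<bar>Y \<omega>\<bar> * \<bar>W \<omega>\<bar>)"
  proof (rule Bochner_Integration.integrable_bound)
    show "integrable M (\<lambda>\<omega>. 2 * real m * \<bar>Y \<omega>\<bar>)" using Yint by simp
    show "(\<lambda>\<omega>. \<bar>Y \<omega>\<bar> * \<bar>W \<omega>\<bar>) \<in> borel_measurable M" using Ym WM by measurable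
    show "AE x in M. norm (\<bar>Y x\<bar> * \<bar>W x\<bar>) \<le> norm (2 * real m * \<bar>Y x\<bar>)"
    proof (rule AE_I2)
      fix x
      have "\<bar>Y x\<bar> * \<bar>W x\<bar> \<le> \<bar>Y x\<bar> * (2 * real m)" by (rule mult_left_mono[OF Wb]) simp
      then show "norm (\<bar>Y x\<bar> * \<bar>W x\<bar>) \<le> norm (2 * real m * \<bar>Y x\<bar>)" by (simp add: abs_mult mult.commute)
    qed
  qed
  have intYW': "integrable M (\<lambda>\<omega>. Y \<omega> * W \<omega>)"
  proof (rule Bochner_Integration.integrable_bound[OF intYW])
    show "(\<lambda>\<omega>. Y \<omega> * W \<omega>) \<in> borel_measurable M" using Ym WM by measurable
  qed (auto simp: abs_mult)
  have qR: "q \<le> 2 * real R" using q2 by (simp add: R_def) linarith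
  have R0: "R > 0" using qR q2 by (cases R) auto
  define g where "g \<omega> = T / p * \<bar>Y \<omega>\<bar> powr p + T / q * ((q / (2 * real R)) * \<bar>W \<omega>\<bar> ^ (2*R) / T ^ (2*R) + (1 - q / (2 * real R)))" for \<omega>
  have intg: "integrable M g"
  proof -
    have "integrable M (\<lambda>\<omega>. \<bar>W \<omega>\<bar> ^ (2*R))" using intW by (simp add: power_even_abs)
    then show ?thesis unfolding g_def using intp' by simp
  qed
  have upper: "(\<integral>\<omega>. Y \<omega> * W \<omega> \<partial>M) < T"
  proof -
    have "(\<integral>\<omega>. Y \<omega> * W \<omega> \<partial>M) \<le> (\<integral>\<omega>. g \<omega> \<partial>M)"
    proof (rule integral_mono[OF intYW' intg])
      fix \<omega>
      have "Y \<omega> * W \<omega> \<le> \<bar>Y \<omega>\<bar> * \<bar>W \<omega>\<bar>" by (metis abs_ge_self abs_mult)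
      also have "\<dots> \<le> g \<omega>" unfolding g_def
        by (rule young_interp[OF p1 q_def T0 qR]) auto
      finally show "Y \<omega> * W \<omega> \<le> g \<omega>" .
    qed
    also have "(\<integral>\<omega>. g \<omega> \<partial>M) = T / p * 1 + T / q * ((q / (2 * real R)) * (\<integral>\<omega>. W \<omega> ^ (2*R) \<partial>M) / T ^ (2*R) + (1 - q / (2 * real R)))"
    proof -
      have "integrable M (\<lambda>\<omega>. \<bar>W \<omega>\<bar> ^ (2*R))" using intW by (simp add: power_even_abs)
      then show ?thesis unfolding g_def using intp' EYp by (simp add: power_even_abs prob_space)
    qed
    also have "\<dots> < T / p + T / q * 1"
    proof -
      have "(\<integral>\<omega>. W \<omega> ^ (2*R) \<partial>M) / T ^ (2*R) < 1" using mom T0 by simp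
      then have "(q / (2 * real R)) * ((\<integral>\<omega>. W \<omega> ^ (2*R) \<partial>M) / T ^ (2*R)) < (q / (2 * real R)) * 1"
        using q2 R0 by (intro mult_strict_left_mono) auto
      then have Q: "(q / (2 * real R)) * (\<integral>\<omega>. W \<omega> ^ (2*R) \<partial>M) / T ^ (2*R) + (1 - q / (2 * real R)) < 1"
        by simp
      have "T / q > 0" using T0 q2 by simp
      from mult_strict_left_mono[OF Q this] show ?thesis by simp
    qed
    also have "\<dots> = T"
    proof -
      have "1 / q = (p - 1) / p" using p1 by (simp add: q_def)
      then have "1 / p + 1 / q = 1" using p1 by (simp add: field_simps)
      then have "T * (1 / p + 1 / q) = T" by simp
      then show ?thesis by (simp add: algebra_simps)
    qed
    finally show ?thesis .
  qed
  show False using EYW upper by simp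
qed

end
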